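(* Let $0<\epsilon<1$ and let $\mathcal C$ be a family of Boolean functions such that every $f:\{0,1\}^n\to\{0,1\}$ in $\mathcal C$ satisfies $\deg_\pm(f)\ge cn^\alpha$, for some constants $c>0$ and $\alpha>0$. Then for every $f\in\mathcal C$, $D(f)\le O(M_\epsilon(f)^{1/\alpha})$.
   Context: $\mathsf N_\epsilon(f)$ is the minimum degree of a real polynomial $p$ with $|p(x)|\le\epsilon$ whenever $f(x)=0$ and $|p(x)|\ge1$ whenever $f(x)=1$; $\overline f=1-f$; $M_\epsilon(f)=\max\{\mathsf N_\epsilon(f),\mathsf N_\epsilon(\overline f)\}$. The sign degree $\deg_\pm(f)$ is the minimum degree of a real polynomial $p$ such that $p(x)<0$ iff $f(x)=1$ for all $x\in\{0,1\}^n$. $D(f)$ is deterministic decision tree complexity. The constant in $O(\cdot)$ depends on $c,\alpha$. *)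

theory Defs
  imports Main "HOL-Library.Discrete_Functions"
begin

text \<open>Inputs are modelled as nat \<Rightarrow> bool; the Boolean cube of dimension n is the set
of inputs that are False outside the first n coordinates. A Boolean function on n
variables is a map (nat \<Rightarrow> bool) \<Rightarrow> bool, only its values on the cube matter.
True plays the role of 1.\<close>

definition cube :: "nat \<Rightarrow> (nat \<Rightarrow> bool) set" where
  "cube n = {x. \<forall>i. n \<le> i \<longrightarrow> \<not> x i}"

text \<open>Real polynomials on the cube, in multilinear (monomial) representation:
a coefficient for each monomial prod over S of x_i, S a subset of the variables.\<close>

definition poly_eval :: "nat \<Rightarrow> (nat set \<Rightarrow> real) \<Rightarrow> (nat \<Rightarrow> bool) \<Rightarrow> real" where
  "poly_eval n a x = (\<Sum>S\<in>Pow {..<n}. a S * (\<Prod>i\<in>S. if x i then 1 else 0))"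

definition poly_deg_le :: "nat \<Rightarrow> (nat set \<Rightarrow> real) \<Rightarrow> nat \<Rightarrow> bool" where
  "poly_deg_le n a d \<longleftrightarrow> (\<forall>S. S \<subseteq> {..<n} \<and> a S \<noteq> 0 \<longrightarrow> card S \<le> d)"

definition N_eps :: "real \<Rightarrow> nat \<Rightarrow> ((nat \<Rightarrow> bool) \<Rightarrow> bool) \<Rightarrow> nat" where
  "N_eps eps n f = (LEAST d. \<exists>a. poly_deg_le n a d \<and>
      (\<forall>x\<in>cube n. (\<not> f x \<longrightarrow> \<bar>poly_eval n a x\<bar> \<le> eps) \<and>
                  (f x \<longrightarrow> \<bar>poly_eval n a x\<bar> \<ge> 1)))"

definition M_eps :: "real \<Rightarrow> nat \<Rightarrow> ((nat \<Rightarrow> bool) \<Rightarrow> bool) \<Rightarrow> nat" where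
  "M_eps eps n f = max (N_eps eps n f) (N_eps eps n (\<lambda>x. \<not> f x))"

definition sign_deg :: "nat \<Rightarrow> ((nat \<Rightarrow> bool) \<Rightarrow> bool) \<Rightarrow> nat" where
  "sign_deg n f = (LEAST d. \<exists>a. poly_deg_le n a d \<and>
      (\<forall>x\<in>cube n. poly_eval n a x < 0 \<longleftrightarrow> f x))"

datatype dtree = Leaf bool | Query nat dtree dtree

fun dt_eval :: "dtree \<Rightarrow> (nat \<Rightarrow> bool) \<Rightarrow> bool" where
  "dt_eval (Leaf b) x = b"
| "dt_eval (Query i t0 t1) x = (if x i then dt_eval t1 x else dt_eval t0 x)"

fun dt_depth :: "dtree \<Rightarrow> nat" where
  "dt_depth (Leaf b) = 0"
| "dt_depth (Query i t0 t1) = Suc (max (dt_depth t0) (dt_depth t1))"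

definition D_dt :: "nat \<Rightarrow> ((nat \<Rightarrow> bool) \<Rightarrow> bool) \<Rightarrow> nat" where
  "D_dt n f = (LEAST d. \<exists>t. dt_depth t = d \<and> (\<forall>x\<in>cube n. dt_eval t x = f x))"

end

theory Submission
  imports Defs
begin

lemma ind_prod:
  assumes "finite S"
  shows "(\<Prod>i\<in>S. (if x i then 1 else 0::real)) = (if (\<forall>i\<in>S. x i) then 1 else 0)"
  using assms by (induction S rule: finite_induct) auto

lemma ind_prod_un:
  assumes "finite S" "finite T"
  shows "(\<Prod>i\<in>S \<union> T. (if x i then 1 else 0::real)) =
         (\<Prod>i\<in>S. (if x i then 1 else 0::real)) * (\<Prod>i\<in>T. (if x i then 1 else 0::real))"
  using assms by (simp add: ind_prod) blast

definition pmul :: "nat \<Rightarrow> (nat set \<Rightarrow> real) \<Rightarrow> (nat set \<Rightarrow> real) \<Rightarrow> nat set \<Rightarrow> real" where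
  "pmul n a b U = (\<Sum>p\<in>{p \<in> Pow {..<n} \<times> Pow {..<n}. fst p \<union> snd p = U}. a (fst p) * b (snd p))"

lemma pmul_eval: "poly_eval n (pmul n a b) x = poly_eval n a x * poly_eval n b x"
proof -
  let ?P = "\<lambda>S. (\<Prod>i\<in>S. (if x i then 1 else 0::real))"
  have "poly_eval n a x * poly_eval n b x = (\<Sum>S\<in>Pow {..<n}. \<Sum>T\<in>Pow {..<n}. a S * ?P S * (b T * ?P T))"
    unfolding poly_eval_def by (simp add: sum_product)
  also have "\<dots> = (\<Sum>S\<in>Pow {..<n}. \<Sum>T\<in>Pow {..<n}. a S * b T * ?P (S \<union> T))"
  proof (intro sum.cong refl)
    fix S T assume "S \<in> Pow {..<n}" "T \<in> Pow {..<n}"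
    then have "finite S" "finite T" by (auto intro: finite_subset)
    then show "a S * ?P S * (b T * ?P T) = a S * b T * ?P (S \<union> T)"
      by (simp add: ind_prod_un)
  qed
  also have "\<dots> = (\<Sum>p\<in>Pow {..<n} \<times> Pow {..<n}. a (fst p) * b (snd p) * ?P (fst p \<union> snd p))"
    by (simp add: sum.cartesian_product split_beta)
  also have "\<dots> = (\<Sum>U\<in>Pow {..<n}. \<Sum>p\<in>{p \<in> Pow {..<n} \<times> Pow {..<n}. fst p \<union> snd p = U}.
                      a (fst p) * b (snd p) * ?P (fst p \<union> snd p))"
    by (rule sum.group[symmetric]) auto
  also have "\<dots> = (\<Sum>U\<in>Pow {..<n}. pmul n a b U * ?P U)"
    unfolding pmul_def by (simp add: sum_distrib_right)
  finally show ?thesis unfolding poly_eval_def by simp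
qed

lemma pmul_deg:
  assumes "poly_deg_le n a d" "poly_deg_le n b e"
  shows "poly_deg_le n (pmul n a b) (d + e)"
  unfolding poly_deg_le_def
proof (intro allI impI)
  fix U assume U: "U \<subseteq> {..<n} \<and> pmul n a b U \<noteq> 0"
  have "\<exists>p\<in>{p \<in> Pow {..<n} \<times> Pow {..<n}. fst p \<union> snd p = U}. a (fst p) * b (snd p) \<noteq> 0"
  proof (rule ccontr)
    assume "\<not> ?thesis"
    then have "pmul n a b U = 0" unfolding pmul_def by (intro sum.neutral) auto
    with U show False by simp
  qed
  then obtain p where p: "p \<in> Pow {..<n} \<times> Pow {..<n}" "fst p \<union> snd p = U"
      "a (fst p) * b (snd p) \<noteq> 0" by blast
  have "card (fst p) \<le> d" using assms(1) p unfolding poly_deg_le_def by auto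
  moreover have "card (snd p) \<le> e" using assms(2) p unfolding poly_deg_le_def by auto
  moreover have "card U \<le> card (fst p) + card (snd p)"
    using p(2) card_Un_le by blast
  ultimately show "card U \<le> d + e" by linarith
qed

definition pconst :: "real \<Rightarrow> nat set \<Rightarrow> real" where
  "pconst r S = (if S = {} then r else 0)"

lemma pconst_eval: "poly_eval n (pconst r) x = r"
proof -
  have "poly_eval n (pconst r) x = (\<Sum>S\<in>Pow {..<n}. if S = {} then r else 0)"
    unfolding poly_eval_def pconst_def by (intro sum.cong) auto
  also have "\<dots> = r" by (simp add: sum.delta)
  finally show ?thesis .
qed

lemma poly_eval_diff: "poly_eval n (\<lambda>S. a S - b S) x = poly_eval n a x - poly_eval n b x"
  unfolding poly_eval_def by (simp add: left_diff_distrib sum_subtractf)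

lemma sum_subsets_exists:
  assumes "finite (U :: nat set)"
  shows "\<forall>g. \<exists>a. \<forall>X\<subseteq>U. (\<Sum>S\<in>Pow X. a S) = (g X :: real)"
  using assms
proof (induction U rule: finite_induct)
  case empty
  show ?case
  proof
    fix g :: "nat set \<Rightarrow> real"
    show "\<exists>a. \<forall>X\<subseteq>{}. (\<Sum>S\<in>Pow X. a S) = g X"
      by (rule exI[of _ "\<lambda>_. g {}"]) auto
  qed
next
  case (insert u U)
  show ?case
  proof
    fix g :: "nat set \<Rightarrow> real"
    obtain a' where a': "\<forall>X\<subseteq>U. (\<Sum>S\<in>Pow X. a' S) = g X"
      using spec[OF insert.IH, of g] by blast
    obtain b where b: "\<forall>X\<subseteq>U. (\<Sum>S\<in>Pow X. b S) = g (insert u X) - g X"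
      using spec[OF insert.IH, of "\<lambda>X. g (insert u X) - g X"] by blast
    define a where "a S = (if u \<in> S then b (S - {u}) else a' S)" for S
    have "(\<Sum>S\<in>Pow X. a S) = g X" if X: "X \<subseteq> insert u U" for X
    proof (cases "u \<in> X")
      case False
      then have "X \<subseteq> U" using X by auto
      have "(\<Sum>S\<in>Pow X. a S) = (\<Sum>S\<in>Pow X. a' S)"
        using False by (intro sum.cong) (auto simp: a_def)
      then show ?thesis using a' \<open>X \<subseteq> U\<close> by simp
    next
      case True
      define X' where "X' = X - {u}"
      have X'U: "X' \<subseteq> U" using X insert.hyps X'_def by auto
      have uX': "u \<notin> X'" by (simp add: X'_def)
      have XX: "X = insert u X'" using True X'_def by auto
      have fin: "finite X'" using X'U insert.hyps finite_subset by blast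
      have "Pow X = Pow X' \<union> insert u ` Pow X'" using XX by (simp add: Pow_insert)
      moreover have "Pow X' \<inter> insert u ` Pow X' = {}" using uX' by auto
      ultimately have s1: "(\<Sum>S\<in>Pow X. a S) = (\<Sum>S\<in>Pow X'. a S) + (\<Sum>S\<in>insert u ` Pow X'. a S)"
        using fin by (simp add: sum.union_disjoint)
      have s2: "(\<Sum>S\<in>Pow X'. a S) = (\<Sum>S\<in>Pow X'. a' S)"
        using uX' by (intro sum.cong) (auto simp: a_def)
      have s3: "(\<Sum>S\<in>insert u ` Pow X'. a S) = (\<Sum>S\<in>Pow X'. a (insert u S))"
      proof -
        have "inj_on (insert u) (Pow X')" using uX' unfolding inj_on_def
          by (metis PowD insert_ident subsetD)
        then show ?thesis by (simp add: sum.reindex)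
      qed
      have s4: "(\<Sum>S\<in>Pow X'. a (insert u S)) = (\<Sum>S\<in>Pow X'. b S)"
      proof (intro sum.cong refl)
        fix S assume "S \<in> Pow X'"
        then have "u \<notin> S" using uX' by auto
        then have "insert u S - {u} = S" by auto
        then show "a (insert u S) = b S" by (simp add: a_def)
      qed
      have "(\<Sum>S\<in>Pow X'. a' S) = g X'" using a' X'U by blast
      moreover have "(\<Sum>S\<in>Pow X'. b S) = g X - g X'" using b X'U XX by simp
      ultimately show ?thesis using s1 s2 s3 s4 by simp
    qed
    then show "\<exists>a. \<forall>X\<subseteq>insert u U. (\<Sum>S\<in>Pow X. a S) = g X" by blast
  qed
qed

lemma exact_rep:
  "\<exists>a. \<forall>x\<in>cube n. poly_eval n a x = h x"
proof -
  define g where "g X = h (\<lambda>i. i \<in> X)" for X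
  obtain a where a: "\<forall>X\<subseteq>{..<n}. (\<Sum>S\<in>Pow X. a S) = g X"
    using sum_subsets_exists[of "{..<n}"] by blast
  have "poly_eval n a x = h x" if x: "x \<in> cube n" for x
  proof -
    define X where "X = {i. i < n \<and> x i}"
    have XS: "X \<subseteq> {..<n}" by (auto simp: X_def)
    have "poly_eval n a x = (\<Sum>S\<in>Pow {..<n}. if S \<subseteq> X then a S else 0)"
      unfolding poly_eval_def
    proof (intro sum.cong refl)
      fix S assume "S \<in> Pow {..<n}"
      then have "finite S" "S \<subseteq> {..<n}" by (auto intro: finite_subset)
      then show "a S * (\<Prod>i\<in>S. if x i then 1 else 0) = (if S \<subseteq> X then a S else 0)"
        by (auto simp: ind_prod X_def)
    qed
    also have "\<dots> = (\<Sum>S\<in>Pow X. a S)"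
    proof -
      have e: "Pow {..<n} \<inter> {S. S \<subseteq> X} = Pow X" using XS by auto
      show ?thesis by (simp add: sum.If_cases e)
    qed
    also have "\<dots> = g X" using a XS by simp
    also have "\<dots> = h x"
    proof -
      have "(\<lambda>i. i \<in> X) = x"
      proof
        fix i
        show "(i \<in> X) = x i"
        proof (cases "i < n")
          case True then show ?thesis by (simp add: X_def)
        next
          case False then show ?thesis using x by (simp add: X_def cube_def)
        qed
      qed
      then show ?thesis by (simp add: g_def)
    qed
    finally show ?thesis .
  qed
  then show ?thesis by blast
qed

fun mk :: "((nat \<Rightarrow> bool) \<Rightarrow> bool) \<Rightarrow> nat \<Rightarrow> dtree" where
  "mk f 0 = Leaf (f (\<lambda>_. False))"
| "mk f (Suc m) = Query m (mk (\<lambda>x. f (x(m:=False))) m) (mk (\<lambda>x. f (x(m:=True))) m)"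

lemma mk_depth: "dt_depth (mk f m) = m"
  by (induction m arbitrary: f) auto

lemma mk_eval: "dt_eval (mk f m) x = f (\<lambda>i. if i < m then x i else False)"
proof (induction m arbitrary: f)
  case 0
  then show ?case by simp
next
  case (Suc m)
  have e: "(\<lambda>i. if i < m then x i else False)(m := x m) = (\<lambda>i. if i < Suc m then x i else False)"
    by (auto simp: fun_eq_iff less_Suc_eq)
  show ?case
  proof (cases "x m")
    case True
    then show ?thesis using Suc e by (simp del: fun_upd_apply)
  next
    case False
    then show ?thesis using Suc e by (simp del: fun_upd_apply)
  qed
qed

lemma D_le: "D_dt n f \<le> n"
proof -
  have "\<forall>x\<in>cube n. dt_eval (mk f n) x = f x"
  proof
    fix x assume x: "x \<in> cube n"
    have "(\<lambda>i. if i < n then x i else False) = x"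
      using x by (auto simp: fun_eq_iff cube_def)
    then show "dt_eval (mk f n) x = f x" by (simp add: mk_eval)
  qed
  then have "\<exists>t. dt_depth t = n \<and> (\<forall>x\<in>cube n. dt_eval t x = f x)"
    using mk_depth by blast
  then show ?thesis unfolding D_dt_def by (rule Least_le)
qed

lemma sign_le:
  assumes eps: "0 < eps" "eps < 1"
  shows "sign_deg n f \<le> 2 * N_eps eps n f"
proof -
  let ?P = "\<lambda>d. \<exists>a. poly_deg_le n a d \<and>
      (\<forall>x\<in>cube n. (\<not> f x \<longrightarrow> \<bar>poly_eval n a x\<bar> \<le> eps) \<and>
                  (f x \<longrightarrow> \<bar>poly_eval n a x\<bar> \<ge> 1))"
  obtain a0 where a0: "\<forall>x\<in>cube n. poly_eval n a0 x = (if f x then 1 else 0)"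
    using exact_rep[of n "\<lambda>x. if f x then 1 else 0"] by blast
  have "poly_deg_le n a0 n" unfolding poly_deg_le_def
    by (metis card_lessThan card_mono finite_lessThan)
  then have "?P n" using a0 eps by auto
  then have "?P (N_eps eps n f)" unfolding N_eps_def by (rule LeastI)
  then obtain a where adeg: "poly_deg_le n a (N_eps eps n f)"
    and aprop: "\<forall>x\<in>cube n. (\<not> f x \<longrightarrow> \<bar>poly_eval n a x\<bar> \<le> eps) \<and>
                  (f x \<longrightarrow> \<bar>poly_eval n a x\<bar> \<ge> 1)" by blast
  define r where "r = ((1 + eps) / 2)^2"
  define q where "q S = pconst r S - pmul n a a S" for S
  have qdeg: "poly_deg_le n q (2 * N_eps eps n f)"
  proof -
    have pd: "poly_deg_le n (pmul n a a) (N_eps eps n f + N_eps eps n f)"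
      using pmul_deg[OF adeg adeg] .
    show ?thesis unfolding poly_deg_le_def
    proof (intro allI impI)
      fix S assume S: "S \<subseteq> {..<n} \<and> q S \<noteq> 0"
      show "card S \<le> 2 * N_eps eps n f"
      proof (cases "S = {}")
        case True then show ?thesis by simp
      next
        case False
        then have "pmul n a a S \<noteq> 0" using S by (simp add: q_def pconst_def)
        then show ?thesis using pd S unfolding poly_deg_le_def by auto
      qed
    qed
  qed
  have qeval: "poly_eval n q x = r - (poly_eval n a x)^2" for x
    unfolding q_def by (simp add: poly_eval_diff[of n "pconst r" "pmul n a a"] pconst_eval pmul_eval power2_eq_square)
  have "\<forall>x\<in>cube n. poly_eval n q x < 0 \<longleftrightarrow> f x"
  proof
    fix x assume x: "x \<in> cube n"
    let ?p = "poly_eval n a x"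
    show "poly_eval n q x < 0 \<longleftrightarrow> f x"
    proof (cases "f x")
      case True
      then have "\<bar>?p\<bar> \<ge> 1" using aprop x by blast
      then have "?p^2 \<ge> 1" using abs_le_square_iff[of 1 ?p] by simp
      moreover have "r < 1" using eps unfolding r_def by (simp add: power_less_one_iff)
      ultimately show ?thesis using True qeval by simp
    next
      case False
      then have "\<bar>?p\<bar> \<le> eps" using aprop x by blast
      then have "?p^2 \<le> eps^2" by (metis abs_le_square_iff abs_of_pos eps(1))
      moreover have "eps^2 < r" unfolding r_def
        using eps by (intro power_strict_mono) auto
      ultimately show ?thesis using False qeval by simp
    qed
  qed
  then have "\<exists>a. poly_deg_le n a (2 * N_eps eps n f) \<and> (\<forall>x\<in>cube n. poly_eval n a x < 0 \<longleftrightarrow> f x)"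
    using qdeg by blast
  then show ?thesis unfolding sign_deg_def by (rule Least_le)
qed

theorem lemma3p2:
  fixes c \<alpha> :: real
  assumes "c > 0" and "\<alpha> > 0"
  shows "\<exists>K::real. \<forall>(eps::real) (C :: (nat \<times> ((nat \<Rightarrow> bool) \<Rightarrow> bool)) set).
           0 < eps \<and> eps < 1 \<and>
           (\<forall>(n, f)\<in>C. real (sign_deg n f) \<ge> c * real n powr \<alpha>) \<longrightarrow>
           (\<forall>(n, f)\<in>C. real (D_dt n f) \<le> K * real (M_eps eps n f) powr (1 / \<alpha>))"
proof (intro exI allI impI)
  fix eps :: real and C :: "(nat \<times> ((nat \<Rightarrow> bool) \<Rightarrow> bool)) set"
  assume H: "0 < eps \<and> eps < 1 \<and> (\<forall>(n, f)\<in>C. real (sign_deg n f) \<ge> c * real n powr \<alpha>)"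
  show "\<forall>(n, f)\<in>C. real (D_dt n f) \<le> (2 / c) powr (1 / \<alpha>) * real (M_eps eps n f) powr (1 / \<alpha>)"
  proof (intro ballI, clarify)
    fix n f assume nf: "(n, f) \<in> C"
    let ?M = "real (M_eps eps n f)"
    have "real (sign_deg n f) \<le> 2 * real (N_eps eps n f)"
      using sign_le[of eps n f] H by linarith
    also have "\<dots> \<le> 2 * ?M" unfolding M_eps_def by simp
    finally have "c * real n powr \<alpha> \<le> 2 * ?M" using H nf by fastforce
    then have A: "real n powr \<alpha> \<le> 2 * ?M / c" using assms by (simp add: field_simps)
    have "real n = (real n powr \<alpha>) powr (1 / \<alpha>)"
      using assms by (simp add: powr_powr)
    also have "\<dots> \<le> (2 * ?M / c) powr (1 / \<alpha>)"
      using A assms by (intro powr_mono2) auto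
    also have "\<dots> = (2 / c) powr (1 / \<alpha>) * ?M powr (1 / \<alpha>)"
      using assms by (simp add: powr_mult[symmetric])
    finally have "real n \<le> (2 / c) powr (1 / \<alpha>) * ?M powr (1 / \<alpha>)" .
    moreover have "real (D_dt n f) \<le> real n" using D_le by simp
    ultimately show "real (D_dt n f) \<le> (2 / c) powr (1 / \<alpha>) * ?M powr (1 / \<alpha>)" by linarith
  qed
qed

end
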